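(* Let $a<b$ be real numbers, $f\in L^1(a,b)$, let $r_1,\dots,r_n\in\mathbb{Q}^+\cup\{0\}$ be pairwise distinct and $c_1,\dots,c_n\in\mathbb{C}$ not all zero. Then the fractional integral equation $$c_1I_{a^+}^{r_1}x+c_2I_{a^+}^{r_2}x+\dots+c_nI_{a^+}^{r_n}x=f$$ has at most one solution $x\in L^1(a,b)$.
   Context: For $\alpha>0$ and $g\in L^1(a,b)$, the left Riemann–Liouville fractional integral is $(I_{a^+}^{\alpha}g)(x)=\frac{1}{\Gamma(\alpha)}\int_a^x \frac{g(t)}{(x-t)^{1-\alpha}}\,dt$; $I_{a^+}^0$ is the identity. These operators map $L^1(a,b)$ to itself and satisfy $I_{a^+}^{\alpha}I_{a^+}^{\beta}=I_{a^+}^{\alpha+\beta}$. *)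

theory Defs
  imports "HOL-Analysis.Analysis"
begin

definition RL_int :: "real \<Rightarrow> real \<Rightarrow> (real \<Rightarrow> complex) \<Rightarrow> real \<Rightarrow> complex" where
  "RL_int a \<alpha> g x =
     (if \<alpha> = 0 then g x
      else complex_of_real (1 / Gamma \<alpha>) *
           (LINT t:{a<..<x}|lborel. complex_of_real ((x - t) powr (\<alpha> - 1)) * g t))"

end

theory Submission
  imports Defs
begin


definition kern :: "real \<Rightarrow> real \<Rightarrow> real \<Rightarrow> real \<Rightarrow> real" where
  "kern a \<alpha> t s = (if a < s \<and> s < t then (t - s) powr (\<alpha> - 1) else 0)"

lemma kern_nonneg: "kern a \<alpha> t s \<ge> 0" by (simp add: kern_def)

lemma kern_meas[measurable]: "(\<lambda>p. kern a \<alpha> (fst p) (snd p)) \<in> borel_measurable (lborel \<Otimes>\<^sub>M lborel)"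
  unfolding kern_def by measurable

lemma kern_meas1[measurable]: "kern a \<alpha> t \<in> borel_measurable lborel"
  unfolding kern_def by measurable

lemma kern_meas2[measurable]: "(\<lambda>t. kern a \<alpha> t s) \<in> borel_measurable lborel"
  unfolding kern_def by measurable

lemma powr_has_integral:
  fixes \<alpha> s d :: real
  assumes "\<alpha> > 0" "s \<le> d"
  shows "((\<lambda>t. (t - s) powr (\<alpha> - 1)) has_integral ((d - s) powr \<alpha> / \<alpha>)) {s..d}"
proof -
  have "((\<lambda>x. x powr (\<alpha> - 1)) has_integral ((d-s) powr \<alpha> / \<alpha>)) {0..d-s}"
    using has_integral_powr_from_0[of "\<alpha>-1" "d-s"] assms by auto
  from has_integral_affinity'[OF this[unfolded cbox_interval[symmetric]], of 1 "-s"]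
  show ?thesis by (simp add: cbox_interval)
qed

lemma inner_powr:
  fixes \<alpha> s d :: real
  assumes "\<alpha> > 0" "s \<le> d"
  shows "(\<integral>\<^sup>+ t. indicator {s<..<d} t * ennreal ((t - s) powr (\<alpha> - 1)) \<partial>lborel) = ennreal ((d - s) powr \<alpha> / \<alpha>)"
proof -
  have "((\<lambda>t. (t - s) powr (\<alpha> - 1)) has_integral ((d - s) powr \<alpha> / \<alpha>)) {s<..<d}"
    using powr_has_integral[OF assms] by (simp add: has_integral_Icc_iff_Ioo)
  from nn_integral_has_integral_lebesgue'[OF _ this]
  show ?thesis by (simp add: mult.commute)
qed

lemma pred_Ioo_pair[measurable]:
  "Measurable.pred (borel \<Otimes>\<^sub>M borel) (\<lambda>x::real\<times>real. fst x \<in> {c<..<snd x})"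
  by simp

lemma pred_Ioo_pair2[measurable]:
  "Measurable.pred (borel \<Otimes>\<^sub>M borel) (\<lambda>x::real\<times>real. snd x \<in> {c<..<fst x})"
  by simp

lemma tonelli:
  fixes \<alpha> c d :: real and F :: "real \<Rightarrow> ennreal"
  assumes "\<alpha> > 0" "c \<le> d" and [measurable]: "F \<in> borel_measurable borel"
  shows "(\<integral>\<^sup>+ t. indicator {c<..<d} t * (\<integral>\<^sup>+ s. indicator {c<..<t} s * ennreal ((t-s) powr (\<alpha>-1)) * F s \<partial>lborel) \<partial>lborel)
     \<le> ennreal ((d-c) powr \<alpha> / \<alpha>) * (\<integral>\<^sup>+ s. indicator {c<..<d} s * F s \<partial>lborel)"
proof -
  have "(\<integral>\<^sup>+ t. indicator {c<..<d} t * (\<integral>\<^sup>+ s. indicator {c<..<t} s * ennreal ((t-s) powr (\<alpha>-1)) * F s \<partial>lborel) \<partial>lborel)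
      = (\<integral>\<^sup>+ t. (\<integral>\<^sup>+ s. indicator {c<..<d} t * (indicator {c<..<t} s * ennreal ((t-s) powr (\<alpha>-1)) * F s) \<partial>lborel) \<partial>lborel)"
    by (intro nn_integral_cong nn_integral_cmult[symmetric]) measurable
  also have "\<dots> = (\<integral>\<^sup>+ s. (\<integral>\<^sup>+ t. indicator {c<..<d} t * (indicator {c<..<t} s * ennreal ((t-s) powr (\<alpha>-1)) * F s) \<partial>lborel) \<partial>lborel)"
    by (rule lborel_pair.Fubini') measurable
  also have "\<dots> = (\<integral>\<^sup>+ s. (indicator {c<..<d} s * F s) * (\<integral>\<^sup>+ t. indicator {s<..<d} t * ennreal ((t-s) powr (\<alpha>-1)) \<partial>lborel) \<partial>lborel)"
  proof (intro nn_integral_cong)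
    fix s :: real
    have "(\<integral>\<^sup>+ t. indicator {c<..<d} t * (indicator {c<..<t} s * ennreal ((t-s) powr (\<alpha>-1)) * F s) \<partial>lborel)
       = (\<integral>\<^sup>+ t. (indicator {c<..<d} s * F s) * (indicator {s<..<d} t * ennreal ((t-s) powr (\<alpha>-1))) \<partial>lborel)"
      by (intro nn_integral_cong) (auto simp: indicator_def mult_ac)
    also have "\<dots> = (indicator {c<..<d} s * F s) * (\<integral>\<^sup>+ t. indicator {s<..<d} t * ennreal ((t-s) powr (\<alpha>-1)) \<partial>lborel)"
      by (intro nn_integral_cmult) measurable
    finally show "(\<integral>\<^sup>+ t. indicator {c<..<d} t * (indicator {c<..<t} s * ennreal ((t-s) powr (\<alpha>-1)) * F s) \<partial>lborel)
       = (indicator {c<..<d} s * F s) * (\<integral>\<^sup>+ t. indicator {s<..<d} t * ennreal ((t-s) powr (\<alpha>-1)) \<partial>lborel)" .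
  qed
  also have "\<dots> \<le> (\<integral>\<^sup>+ s. ennreal ((d-c) powr \<alpha> / \<alpha>) * (indicator {c<..<d} s * F s) \<partial>lborel)"
  proof (intro nn_integral_mono)
    fix s :: real
    show "(indicator {c<..<d} s * F s) * (\<integral>\<^sup>+ t. indicator {s<..<d} t * ennreal ((t-s) powr (\<alpha>-1)) \<partial>lborel)
        \<le> ennreal ((d-c) powr \<alpha> / \<alpha>) * (indicator {c<..<d} s * F s)"
    proof (cases "s \<in> {c<..<d}")
      case True
      then have "(\<integral>\<^sup>+ t. indicator {s<..<d} t * ennreal ((t-s) powr (\<alpha>-1)) \<partial>lborel) = ennreal ((d-s) powr \<alpha> / \<alpha>)"
        by (intro inner_powr) (use assms in auto)
      also have "\<dots> \<le> ennreal ((d-c) powr \<alpha> / \<alpha>)"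
        using True assms by (intro ennreal_leI divide_right_mono powr_mono2) auto
      finally have "(\<integral>\<^sup>+ t. indicator {s<..<d} t * ennreal ((t-s) powr (\<alpha>-1)) \<partial>lborel) \<le> ennreal ((d-c) powr \<alpha> / \<alpha>)" .
      then show ?thesis by (subst mult.commute) (auto intro: mult_right_mono)
    qed simp
  qed
  also have "\<dots> = ennreal ((d-c) powr \<alpha> / \<alpha>) * (\<integral>\<^sup>+ s. indicator {c<..<d} s * F s \<partial>lborel)"
    by (intro nn_integral_cmult) measurable
  finally show ?thesis .
qed

definition LI :: "real \<Rightarrow> real \<Rightarrow> (real \<Rightarrow> complex) \<Rightarrow> real \<Rightarrow> complex" where
  "LI a \<alpha> g t = (\<integral> s. complex_of_real (kern a \<alpha> t s) * g s \<partial>lborel)"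

lemma RL_LI: "\<alpha> \<noteq> 0 \<Longrightarrow> RL_int a \<alpha> g t = complex_of_real (1 / Gamma \<alpha>) * LI a \<alpha> g t"
  unfolding RL_int_def LI_def set_lebesgue_integral_def
  by (auto intro!: Bochner_Integration.integral_cong simp: kern_def indicator_def)

lemma LI_restrict: "t \<le> b \<Longrightarrow> LI a \<alpha> g t = LI a \<alpha> (\<lambda>s. indicator {a<..<b} s *\<^sub>R g s) t"
  unfolding LI_def
  by (auto intro!: Bochner_Integration.integral_cong simp: kern_def indicator_def)

lemma kern_ennreal: "ennreal (kern a \<alpha> t s) = indicator {a<..<t} s * ennreal ((t - s) powr (\<alpha> - 1))"
  by (simp add: kern_def indicator_def)

lemma norm_LI_le:
  "ennreal (norm (LI a \<alpha> g t)) \<le> (\<integral>\<^sup>+ s. ennreal (kern a \<alpha> t s) * ennreal (norm (g s)) \<partial>lborel)"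
proof (cases "integrable lborel (\<lambda>s. complex_of_real (kern a \<alpha> t s) * g s)")
  case True
  have "ennreal (norm (LI a \<alpha> g t)) \<le> (\<integral>\<^sup>+ s. ennreal (norm (complex_of_real (kern a \<alpha> t s) * g s)) \<partial>lborel)"
    unfolding LI_def by (rule integral_norm_bound_ennreal[OF True])
  also have "\<dots> = (\<integral>\<^sup>+ s. ennreal (kern a \<alpha> t s) * ennreal (norm (g s)) \<partial>lborel)"
    by (intro nn_integral_cong) (simp add: norm_mult kern_nonneg ennreal_mult)
  finally show ?thesis .
next
  case False
  then show ?thesis by (simp add: LI_def not_integrable_integral_eq)
qed

lemma kern_fin:
  fixes g :: "real \<Rightarrow> complex"
  assumes "integrable lborel g" "\<alpha> > 0" "a \<le> b"
  shows "AE t in lborel. t \<in> {a<..<b} \<longrightarrow> (\<integral>\<^sup>+ s. ennreal (kern a \<alpha> t s) * ennreal (norm (g s)) \<partial>lborel) < \<infinity>"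
proof -
  have gm[measurable]: "g \<in> borel_measurable borel" using assms(1) by auto
  have fin: "(\<integral>\<^sup>+ s. ennreal (norm (g s)) \<partial>lborel) < \<infinity>" using assms(1) by (simp add: integrable_iff_bounded)
  have "(\<integral>\<^sup>+ t. indicator {a<..<b} t * (\<integral>\<^sup>+ s. ennreal (kern a \<alpha> t s) * ennreal (norm (g s)) \<partial>lborel) \<partial>lborel)
     = (\<integral>\<^sup>+ t. indicator {a<..<b} t * (\<integral>\<^sup>+ s. indicator {a<..<t} s * ennreal ((t-s) powr (\<alpha>-1)) * ennreal (norm (g s)) \<partial>lborel) \<partial>lborel)"
    by (simp add: kern_ennreal)
  also have "\<dots> \<le> ennreal ((b-a) powr \<alpha> / \<alpha>) * (\<integral>\<^sup>+ s. indicator {a<..<b} s * ennreal (norm (g s)) \<partial>lborel)"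
    by (rule tonelli) (use assms in auto)
  also have "\<dots> \<le> ennreal ((b-a) powr \<alpha> / \<alpha>) * (\<integral>\<^sup>+ s. ennreal (norm (g s)) \<partial>lborel)"
    by (intro mult_left_mono nn_integral_mono) (auto simp: indicator_def)
  also have "\<dots> < \<infinity>" using fin by (simp add: ennreal_mult_less_top)
  finally have "(\<integral>\<^sup>+ t. indicator {a<..<b} t * (\<integral>\<^sup>+ s. ennreal (kern a \<alpha> t s) * ennreal (norm (g s)) \<partial>lborel) \<partial>lborel) \<noteq> \<infinity>"
    by simp
  then have "AE t in lborel. indicator {a<..<b} t * (\<integral>\<^sup>+ s. ennreal (kern a \<alpha> t s) * ennreal (norm (g s)) \<partial>lborel) \<noteq> \<infinity>"
    by (intro nn_integral_PInf_AE) measurable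
  then show ?thesis
    by eventually_elim (auto simp: indicator_def top.not_eq_extremum)
qed

lemma kern_integrable:
  fixes g :: "real \<Rightarrow> complex"
  assumes "integrable lborel g" "(\<integral>\<^sup>+ s. ennreal (kern a \<alpha> t s) * ennreal (norm (g s)) \<partial>lborel) < \<infinity>"
  shows "integrable lborel (\<lambda>s. complex_of_real (kern a \<alpha> t s) * g s)"
proof -
  have gm[measurable]: "g \<in> borel_measurable borel" using assms(1) by auto
  show ?thesis using assms(2)
    by (subst integrable_iff_bounded) (simp add: norm_mult kern_nonneg ennreal_mult)
qed

lemma LI_meas[measurable]:
  fixes g :: "real \<Rightarrow> complex"
  assumes [measurable]: "g \<in> borel_measurable borel"
  shows "LI a \<alpha> g \<in> borel_measurable borel"
proof -
  have "(\<lambda>t. \<integral> s. complex_of_real (kern a \<alpha> t s) * g s \<partial>lborel) \<in> borel_measurable lborel"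
    by (rule lborel.borel_measurable_lebesgue_integral) measurable
  then show ?thesis unfolding LI_def[abs_def] by simp
qed

lemma LI_integrable:
  fixes g :: "real \<Rightarrow> complex"
  assumes "integrable lborel g" "\<alpha> > 0" "a \<le> b"
  shows "integrable lborel (\<lambda>t. indicator {a<..<b} t *\<^sub>R LI a \<alpha> g t)"
proof -
  have gm[measurable]: "g \<in> borel_measurable borel" using assms(1) by auto
  have fin: "(\<integral>\<^sup>+ s. ennreal (norm (g s)) \<partial>lborel) < \<infinity>" using assms(1) by (simp add: integrable_iff_bounded)
  have "(\<integral>\<^sup>+ t. ennreal (norm (indicator {a<..<b} t *\<^sub>R LI a \<alpha> g t)) \<partial>lborel)
     \<le> (\<integral>\<^sup>+ t. indicator {a<..<b} t * (\<integral>\<^sup>+ s. indicator {a<..<t} s * ennreal ((t-s) powr (\<alpha>-1)) * ennreal (norm (g s)) \<partial>lborel) \<partial>lborel)"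
  proof (intro nn_integral_mono)
    fix t
    show "ennreal (norm (indicator {a<..<b} t *\<^sub>R LI a \<alpha> g t)) \<le> indicator {a<..<b} t * (\<integral>\<^sup>+ s. indicator {a<..<t} s * ennreal ((t-s) powr (\<alpha>-1)) * ennreal (norm (g s)) \<partial>lborel)"
      using norm_LI_le[of a \<alpha> g t] by (auto simp: indicator_def kern_ennreal)
  qed
  also have "\<dots> \<le> ennreal ((b-a) powr \<alpha> / \<alpha>) * (\<integral>\<^sup>+ s. indicator {a<..<b} s * ennreal (norm (g s)) \<partial>lborel)"
    by (rule tonelli) (use assms in auto)
  also have "\<dots> \<le> ennreal ((b-a) powr \<alpha> / \<alpha>) * (\<integral>\<^sup>+ s. ennreal (norm (g s)) \<partial>lborel)"
    by (intro mult_left_mono nn_integral_mono) (auto simp: indicator_def)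
  also have "\<dots> < \<infinity>" using fin by (simp add: ennreal_mult_less_top)
  finally show ?thesis by (subst integrable_iff_bounded) auto
qed

lemma beta_has_integral:
  fixes \<alpha> \<beta> s t :: real
  assumes "\<alpha> > 0" "\<beta> > 0" "s < t"
  shows "((\<lambda>u. (t - u) powr (\<beta> - 1) * (u - s) powr (\<alpha> - 1)) has_integral (Beta \<alpha> \<beta> * (t - s) powr (\<alpha> + \<beta> - 1))) {s..t}"
proof -
  define L where "L = t - s"
  have L: "L > 0" using assms by (simp add: L_def)
  have B: "((\<lambda>v. v powr (\<alpha> - 1) * (1 - v) powr (\<beta> - 1)) has_integral Beta \<alpha> \<beta>) (cbox 0 1)"
    using has_integral_Beta_real[OF assms(1,2)] by simp
  note A = has_integral_affinity'[OF B, of "1/L" "- s/L"]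
  have e0: "(0 - - s / L) /\<^sub>R (1 / L) = s" "(1 - - s / L) /\<^sub>R (1 / L) = t" "Beta \<alpha> \<beta> /\<^sub>R (1/L) ^ DIM(real) = Beta \<alpha> \<beta> * L"
    using L by (auto simp: L_def field_simps)
  have "((\<lambda>u. ((1/L) * u - s/L) powr (\<alpha> - 1) * (1 - ((1/L) * u - s/L)) powr (\<beta> - 1)) has_integral (Beta \<alpha> \<beta> * L)) {s..t}"
    using A L unfolding e0 by (simp add: cbox_interval)
  from has_integral_mult_right[OF this, of "L powr (\<alpha> + \<beta> - 2)"]
  have *: "((\<lambda>u. L powr (\<alpha> + \<beta> - 2) * (((1/L) * u - s/L) powr (\<alpha> - 1) * (1 - ((1/L) * u - s/L)) powr (\<beta> - 1))) has_integral (L powr (\<alpha> + \<beta> - 2) * (Beta \<alpha> \<beta> * L))) {s..t}" .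
  have val: "L powr (\<alpha> + \<beta> - 2) * (Beta \<alpha> \<beta> * L) = Beta \<alpha> \<beta> * (t - s) powr (\<alpha> + \<beta> - 1)"
  proof -
    have "L powr (\<alpha> + \<beta> - 2 + 1) = L powr (\<alpha> + \<beta> - 2) * L powr 1" by (rule powr_add)
    also have "\<dots> = L powr (\<alpha> + \<beta> - 2) * L" using L by simp
    finally have "L powr (\<alpha> + \<beta> - 2) * L = L powr (\<alpha> + \<beta> - 1)" by (simp add: algebra_simps)
    then show ?thesis by (simp add: L_def mult_ac)
  qed
  show ?thesis
  proof (rule has_integral_eq[OF _ *[unfolded val]])
    fix u assume u: "u \<in> {s..t}"
    have e1: "(1/L) * u - s/L = (u - s) / L" using L by (simp add: field_simps)
    have e2: "1 - (u - s) / L = (t - u) / L" using L by (simp add: field_simps L_def)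
    have "L powr (\<alpha> + \<beta> - 2) = L powr (\<alpha> - 1) * L powr (\<beta> - 1)"
      using L by (simp add: powr_add[symmetric])
    then show "L powr (\<alpha> + \<beta> - 2) * (((1/L) * u - s/L) powr (\<alpha> - 1) * (1 - ((1/L) * u - s/L)) powr (\<beta> - 1))
        = (t - u) powr (\<beta> - 1) * (u - s) powr (\<alpha> - 1)"
      unfolding e1 e2 using L by (simp add: powr_divide field_simps)
  qed
qed

lemma Beta_pos: "\<alpha> > 0 \<Longrightarrow> \<beta> > 0 \<Longrightarrow> Beta \<alpha> \<beta> > (0::real)"
  by (simp add: Beta_def Gamma_real_pos)

lemma kern_prod_nn:
  fixes \<alpha> \<beta> :: real
  assumes "\<alpha> > 0" "\<beta> > 0"
  shows "(\<integral>\<^sup>+ u. ennreal (kern a \<beta> t u * kern a \<alpha> u s) \<partial>lborel) = ennreal (Beta \<alpha> \<beta> * kern a (\<alpha> + \<beta>) t s)"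
proof (cases "a < s \<and> s < t")
  case True
  have "(\<integral>\<^sup>+ u. ennreal (kern a \<beta> t u * kern a \<alpha> u s) \<partial>lborel)
     = (\<integral>\<^sup>+ u. indicator {s<..<t} u * ennreal ((t - u) powr (\<beta> - 1) * (u - s) powr (\<alpha> - 1)) \<partial>lborel)"
    using True by (intro nn_integral_cong) (auto simp: kern_def indicator_def)
  also have "\<dots> = ennreal (Beta \<alpha> \<beta> * (t - s) powr (\<alpha> + \<beta> - 1))"
    using beta_has_integral[OF assms, of s t] True
    by (subst mult.commute, intro nn_integral_has_integral_lebesgue') (auto simp: has_integral_Icc_iff_Ioo)
  finally show ?thesis using True by (simp add: kern_def)
next
  case False
  then have z: "kern a \<beta> t u * kern a \<alpha> u s = 0" for u by (auto simp: kern_def)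
  have "(\<integral>\<^sup>+ u. ennreal (kern a \<beta> t u * kern a \<alpha> u s) \<partial>lborel) = 0"
    by (simp only: z) simp
  moreover have "kern a (\<alpha> + \<beta>) t s = 0" using False by (simp add: kern_def)
  ultimately show ?thesis by simp
qed

lemma kern_prod_int:
  fixes \<alpha> \<beta> :: real
  assumes "\<alpha> > 0" "\<beta> > 0"
  shows "(\<integral> u. kern a \<beta> t u * kern a \<alpha> u s \<partial>lborel) = Beta \<alpha> \<beta> * kern a (\<alpha> + \<beta>) t s"
proof -
  have "has_bochner_integral lborel (\<lambda>u. kern a \<beta> t u * kern a \<alpha> u s) (Beta \<alpha> \<beta> * kern a (\<alpha> + \<beta>) t s)"
    by (rule has_bochner_integral_nn_integral)
       (use kern_prod_nn[OF assms] Beta_pos[OF assms] in \<open>auto simp: kern_nonneg\<close>)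
  then show ?thesis by (simp add: has_bochner_integral_iff)
qed

lemma semigroup:
  fixes g :: "real \<Rightarrow> complex"
  assumes gi: "integrable lborel g" and ab: "\<alpha> > 0" "\<beta> > 0" "a \<le> b"
  shows "AE t in lborel. t \<in> {a<..<b} \<longrightarrow>
     LI a \<beta> (\<lambda>u. indicator {a<..<b} u *\<^sub>R LI a \<alpha> g u) t = complex_of_real (Beta \<alpha> \<beta>) * LI a (\<alpha> + \<beta>) g t"
proof -
  have finae: "AE t in lborel. t \<in> {a<..<b} \<longrightarrow> (\<integral>\<^sup>+ s. ennreal (kern a (\<alpha> + \<beta>) t s) * ennreal (norm (g s)) \<partial>lborel) < \<infinity>"
    using ab by (intro kern_fin[OF gi _ ab(3)]) auto
  show ?thesis using finae
proof (eventually_elim, intro impI)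
  fix t assume t: "t \<in> {a<..<b}" and fin': "t \<in> {a<..<b} \<longrightarrow> (\<integral>\<^sup>+ s. ennreal (kern a (\<alpha> + \<beta>) t s) * ennreal (norm (g s)) \<partial>lborel) < \<infinity>"
  from fin' t have fin: "(\<integral>\<^sup>+ s. ennreal (kern a (\<alpha> + \<beta>) t s) * ennreal (norm (g s)) \<partial>lborel) < \<infinity>" by simp
  have gm[measurable]: "g \<in> borel_measurable borel" using gi by auto
  define H where "H = (\<lambda>p::real\<times>real. complex_of_real (kern a \<beta> t (fst p) * kern a \<alpha> (fst p) (snd p)) * g (snd p))"
  have Hm[measurable]: "H \<in> borel_measurable (lborel \<Otimes>\<^sub>M lborel)" unfolding H_def by measurable
  have "(\<integral>\<^sup>+ p. ennreal (norm (H p)) \<partial>(lborel \<Otimes>\<^sub>M lborel))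
      = (\<integral>\<^sup>+ s. (\<integral>\<^sup>+ u. ennreal (norm (H (u, s))) \<partial>lborel) \<partial>lborel)"
    by (rule lborel_pair.nn_integral_snd[symmetric]) measurable
  also have "\<dots> = (\<integral>\<^sup>+ s. ennreal (Beta \<alpha> \<beta>) * (ennreal (kern a (\<alpha> + \<beta>) t s) * ennreal (norm (g s))) \<partial>lborel)"
  proof (intro nn_integral_cong)
    fix s :: real
    have "(\<integral>\<^sup>+ u. ennreal (norm (H (u, s))) \<partial>lborel) = (\<integral>\<^sup>+ u. ennreal (kern a \<beta> t u * kern a \<alpha> u s) * ennreal (norm (g s)) \<partial>lborel)"
      by (intro nn_integral_cong) (simp add: H_def norm_mult kern_nonneg ennreal_mult)
    also have "\<dots> = (\<integral>\<^sup>+ u. ennreal (kern a \<beta> t u * kern a \<alpha> u s) \<partial>lborel) * ennreal (norm (g s))"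
      by (rule nn_integral_multc) measurable
    also have "\<dots> = ennreal (Beta \<alpha> \<beta>) * (ennreal (kern a (\<alpha> + \<beta>) t s) * ennreal (norm (g s)))"
      using Beta_pos[OF ab(1,2)] by (simp only: kern_prod_nn[OF ab(1,2)]) (simp add: ennreal_mult kern_nonneg mult_ac)
    finally show "(\<integral>\<^sup>+ u. ennreal (norm (H (u, s))) \<partial>lborel) = ennreal (Beta \<alpha> \<beta>) * (ennreal (kern a (\<alpha> + \<beta>) t s) * ennreal (norm (g s)))" .
  qed
  also have "\<dots> = ennreal (Beta \<alpha> \<beta>) * (\<integral>\<^sup>+ s. ennreal (kern a (\<alpha> + \<beta>) t s) * ennreal (norm (g s)) \<partial>lborel)"
    by (rule nn_integral_cmult) measurable
  also have "\<dots> < \<infinity>" using fin by (simp add: ennreal_mult_less_top)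
  finally have Hi: "integrable (lborel \<Otimes>\<^sub>M lborel) H" by (subst integrable_iff_bounded) auto
  have "LI a \<beta> (\<lambda>u. indicator {a<..<b} u *\<^sub>R LI a \<alpha> g u) t = (\<integral> u. (\<integral> s. H (u, s) \<partial>lborel) \<partial>lborel)"
    unfolding LI_def
  proof (intro Bochner_Integration.integral_cong refl)
    fix u
    show "complex_of_real (kern a \<beta> t u) * (indicator {a<..<b} u *\<^sub>R (\<integral> s. complex_of_real (kern a \<alpha> u s) * g s \<partial>lborel))
        = (\<integral> s. H (u, s) \<partial>lborel)"
    proof (cases "a < u \<and> u < t")
      case True
      then have "u \<in> {a<..<b}" using t by auto
      then show ?thesis
        by (simp add: H_def mult.assoc)
    next
      case False
      then have "kern a \<beta> t u = 0" by (simp add: kern_def)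
      then show ?thesis by (simp add: H_def)
    qed
  qed
  also have "\<dots> = (\<integral> s. (\<integral> u. H (u, s) \<partial>lborel) \<partial>lborel)"
    using lborel_pair.Fubini_integral[of "\<lambda>u s. H (u, s)"] Hi by simp
  also have "\<dots> = (\<integral> s. complex_of_real (Beta \<alpha> \<beta>) * (complex_of_real (kern a (\<alpha> + \<beta>) t s) * g s) \<partial>lborel)"
  proof (intro Bochner_Integration.integral_cong refl)
    fix s
    have "(\<integral> u. H (u, s) \<partial>lborel) = (\<integral> u. complex_of_real (kern a \<beta> t u * kern a \<alpha> u s) \<partial>lborel) * g s"
      unfolding H_def by simp
    also have "\<dots> = complex_of_real (Beta \<alpha> \<beta> * kern a (\<alpha> + \<beta>) t s) * g s"
      by (simp only: integral_complex_of_real kern_prod_int[OF ab(1,2)])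
    finally show "(\<integral> u. H (u, s) \<partial>lborel) = complex_of_real (Beta \<alpha> \<beta>) * (complex_of_real (kern a (\<alpha> + \<beta>) t s) * g s)"
      by simp
  qed
  also have "\<dots> = complex_of_real (Beta \<alpha> \<beta>) * LI a (\<alpha> + \<beta>) g t"
    unfolding LI_def by simp
  finally show "LI a \<beta> (\<lambda>u. indicator {a<..<b} u *\<^sub>R LI a \<alpha> g u) t = complex_of_real (Beta \<alpha> \<beta>) * LI a (\<alpha> + \<beta>) g t" .
qed
qed

lemma LI_local_bound:
  fixes g :: "real \<Rightarrow> complex"
  assumes IH: "AE s in lborel. s \<in> {a<..<c} \<longrightarrow> g s = 0" and ac: "a \<le> c"
  shows "ennreal (norm (LI a \<beta> g t)) \<le> (\<integral>\<^sup>+ s. indicator {c<..<t} s * ennreal ((t-s) powr (\<beta>-1)) * ennreal (norm (g s)) \<partial>lborel)"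
proof -
  have "ennreal (norm (LI a \<beta> g t)) \<le> (\<integral>\<^sup>+ s. ennreal (kern a \<beta> t s) * ennreal (norm (g s)) \<partial>lborel)"
    by (rule norm_LI_le)
  also have "\<dots> = (\<integral>\<^sup>+ s. indicator {c<..<t} s * ennreal ((t-s) powr (\<beta>-1)) * ennreal (norm (g s)) \<partial>lborel)"
    using IH AE_lborel_singleton[of c]
  proof (intro nn_integral_cong_AE, eventually_elim)
    case (elim s)
    then show ?case using ac by (auto simp: kern_def indicator_def)
  qed
  finally show ?thesis .
qed

lemma inner_meas:
  assumes [measurable]: "F \<in> borel_measurable borel"
  shows "(\<lambda>t. indicator {c<..<d} t * (\<integral>\<^sup>+ s. indicator {c<..<t} s * ennreal ((t-s) powr (\<beta>-1)) * F s \<partial>lborel)) \<in> borel_measurable lborel"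
  by measurable

lemma inner_meas2:
  assumes [measurable]: "F \<in> borel_measurable borel"
  shows "(\<lambda>t. K * (indicator {c<..<d} t * (\<integral>\<^sup>+ s. indicator {c<..<t} s * ennreal ((t-s) powr (\<beta>-1)) * F s \<partial>lborel))) \<in> borel_measurable lborel"
  using inner_meas[OF assms] by measurable

lemma gronwall_step:
  fixes g :: "real \<Rightarrow> complex" and S :: "'i set" and \<beta> :: "'i \<Rightarrow> real" and d :: "'i \<Rightarrow> complex"
  assumes gi: "integrable lborel g" and supp: "\<And>s. s \<notin> {a<..<b} \<Longrightarrow> g s = 0"
    and S: "finite S" "\<And>i. i \<in> S \<Longrightarrow> \<beta> i > 0"
    and eq: "AE t in lborel. t \<in> {a<..<b} \<longrightarrow> g t = (\<Sum>i\<in>S. d i * LI a (\<beta> i) g t)"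
    and IH: "AE s in lborel. s \<in> {a<..<c} \<longrightarrow> g s = 0" and ac: "a \<le> c" and h: "h > 0"
    and Hlt: "(\<Sum>i\<in>S. norm (d i) * (h powr \<beta> i / \<beta> i)) < 1"
  shows "AE t in lborel. t \<in> {c<..<c+h} \<longrightarrow> g t = 0"
proof -
  have gm[measurable]: "g \<in> borel_measurable borel" using gi by auto
  define H where "H = (\<Sum>i\<in>S. norm (d i) * (h powr \<beta> i / \<beta> i))"
  have H0: "H \<ge> 0" unfolding H_def
  proof (intro sum_nonneg)
    fix i assume "i \<in> S"
    then have "\<beta> i > 0" by (rule S(2))
    then show "0 \<le> norm (d i) * (h powr \<beta> i / \<beta> i)" by simp
  qed
  define A where "A = (\<integral>\<^sup>+ t. indicator {c<..<c+h} t * ennreal (norm (g t)) \<partial>lborel)"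
  have Afin: "A < \<infinity>"
  proof -
    have "A \<le> (\<integral>\<^sup>+ t. ennreal (norm (g t)) \<partial>lborel)"
      unfolding A_def by (intro nn_integral_mono) (auto simp: indicator_def)
    also have "\<dots> < \<infinity>" using gi by (simp add: integrable_iff_bounded)
    finally show ?thesis .
  qed
  have pw: "AE t in lborel. indicator {c<..<c+h} t * ennreal (norm (g t)) \<le>
     (\<Sum>i\<in>S. ennreal (norm (d i)) * (indicator {c<..<c+h} t *
        (\<integral>\<^sup>+ s. indicator {c<..<t} s * ennreal ((t-s) powr (\<beta> i-1)) * ennreal (norm (g s)) \<partial>lborel)))"
    using eq
  proof eventually_elim
    case (elim t)
    show ?case
    proof (cases "t \<in> {c<..<c+h} \<and> t \<in> {a<..<b}")
      case True
      then have gt: "g t = (\<Sum>i\<in>S. d i * LI a (\<beta> i) g t)" using elim by auto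
      have "ennreal (norm (g t)) \<le> ennreal (\<Sum>i\<in>S. norm (d i) * norm (LI a (\<beta> i) g t))"
        unfolding gt by (intro ennreal_leI order.trans[OF norm_sum]) (simp add: norm_mult)
      also have "\<dots> = (\<Sum>i\<in>S. ennreal (norm (d i)) * ennreal (norm (LI a (\<beta> i) g t)))"
        by (subst sum_ennreal[symmetric]) (auto simp: ennreal_mult)
      also have "\<dots> \<le> (\<Sum>i\<in>S. ennreal (norm (d i)) *
        (\<integral>\<^sup>+ s. indicator {c<..<t} s * ennreal ((t-s) powr (\<beta> i-1)) * ennreal (norm (g s)) \<partial>lborel))"
        by (intro sum_mono mult_left_mono LI_local_bound[OF IH ac]) auto
      finally show ?thesis using True by simp
    next
      case False
      then show ?thesis
      proof (cases "t \<in> {c<..<c+h}")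
        case True
        with False have "g t = 0" using supp by auto
        then show ?thesis by simp
      qed simp
    qed
  qed
  have "A \<le> (\<integral>\<^sup>+ t. (\<Sum>i\<in>S. ennreal (norm (d i)) * (indicator {c<..<c+h} t *
        (\<integral>\<^sup>+ s. indicator {c<..<t} s * ennreal ((t-s) powr (\<beta> i-1)) * ennreal (norm (g s)) \<partial>lborel))) \<partial>lborel)"
    unfolding A_def by (rule nn_integral_mono_AE[OF pw])
  also have "\<dots> = (\<Sum>i\<in>S. ennreal (norm (d i)) * (\<integral>\<^sup>+ t. indicator {c<..<c+h} t *
        (\<integral>\<^sup>+ s. indicator {c<..<t} s * ennreal ((t-s) powr (\<beta> i-1)) * ennreal (norm (g s)) \<partial>lborel) \<partial>lborel))"
    by (subst nn_integral_sum) (auto intro!: sum.cong nn_integral_cmult inner_meas2 inner_meas)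
  also have "\<dots> \<le> (\<Sum>i\<in>S. ennreal (norm (d i)) * (ennreal (((c+h)-c) powr \<beta> i / \<beta> i) * A))"
    unfolding A_def using S h
    by (intro sum_mono mult_left_mono tonelli) auto
  also have "\<dots> = (\<Sum>i\<in>S. ennreal (norm (d i) * (h powr \<beta> i / \<beta> i))) * A"
    unfolding sum_distrib_right
  proof (intro sum.cong refl)
    fix i assume "i \<in> S"
    then have "\<beta> i > 0" by (rule S(2))
    then have "h powr \<beta> i / \<beta> i \<ge> 0" by simp
    then have e: "ennreal (norm (d i) * (h powr \<beta> i / \<beta> i)) = ennreal (norm (d i)) * ennreal (h powr \<beta> i / \<beta> i)"
      by (intro ennreal_mult) auto
    show "ennreal (norm (d i)) * (ennreal (((c+h)-c) powr \<beta> i / \<beta> i) * A) = ennreal (norm (d i) * (h powr \<beta> i / \<beta> i)) * A"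
      unfolding e by (simp add: mult_ac)
  qed
  also have "\<dots> = ennreal H * A"
    unfolding H_def
  proof (subst sum_ennreal)
    fix i assume "i \<in> S"
    then have "\<beta> i > 0" by (rule S(2))
    then show "0 \<le> norm (d i) * (h powr \<beta> i / \<beta> i)" by simp
  qed simp
  finally have AH: "A \<le> ennreal H * A" .
  obtain r where r: "A = ennreal r" "r \<ge> 0" using Afin by (cases A) auto
  have "r \<le> H * r" using AH r H0 by (simp add: ennreal_mult[symmetric])
  then have "r * (1 - H) \<le> 0" by (simp add: algebra_simps)
  moreover have "1 - H > 0" using Hlt H_def by simp
  ultimately have "r \<le> 0" by (simp add: mult_le_0_iff)
  then have "A = 0" using r by simp
  then have "AE t in lborel. indicator {c<..<c+h} t * ennreal (norm (g t)) = 0"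
    unfolding A_def by (subst nn_integral_0_iff_AE[symmetric]) auto
  then show ?thesis by eventually_elim (auto simp: indicator_def)
qed

lemma gronwall:
  fixes g :: "real \<Rightarrow> complex" and S :: "'i set" and \<beta> :: "'i \<Rightarrow> real" and d :: "'i \<Rightarrow> complex"
  assumes gi: "integrable lborel g" and supp: "\<And>s. s \<notin> {a<..<b} \<Longrightarrow> g s = 0"
    and S: "finite S" "\<And>i. i \<in> S \<Longrightarrow> \<beta> i > 0"
    and eq: "AE t in lborel. t \<in> {a<..<b} \<longrightarrow> g t = (\<Sum>i\<in>S. d i * LI a (\<beta> i) g t)"
  shows "AE t in lborel. g t = 0"
proof -
  have lim: "((\<lambda>h. \<Sum>i\<in>S. norm (d i) * (h powr \<beta> i / \<beta> i)) \<longlongrightarrow> 0) (at_right (0::real))"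
  proof (rule tendsto_null_sum)
    fix i assume "i \<in> S"
    then have bi: "\<beta> i > 0" by (rule S(2))
    have "((\<lambda>h::real. h powr \<beta> i) \<longlongrightarrow> 0) (at_right 0)"
      by (rule tendsto_zero_powrI[OF _ tendsto_const _ bi])
         (auto intro: tendsto_ident_at eventually_at_rightI[of 0 1])
    then have "((\<lambda>h::real. h powr \<beta> i / \<beta> i) \<longlongrightarrow> 0) (at_right 0)"
      by (rule tendsto_divide_zero)
    then show "((\<lambda>h::real. norm (d i) * (h powr \<beta> i / \<beta> i)) \<longlongrightarrow> 0) (at_right 0)"
      by (rule tendsto_mult_right_zero)
  qed
  have "eventually (\<lambda>h. (\<Sum>i\<in>S. norm (d i) * (h powr \<beta> i / \<beta> i)) < 1) (at_right (0::real))"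
    using order_tendstoD(2)[OF lim, of 1] by simp
  then obtain b0 where b0: "b0 > 0" "\<And>y. y > 0 \<Longrightarrow> y < b0 \<Longrightarrow> (\<Sum>i\<in>S. norm (d i) * (y powr \<beta> i / \<beta> i)) < 1"
    unfolding eventually_at_right_field by auto
  define h where "h = b0 / 2"
  have h: "h > 0" "(\<Sum>i\<in>S. norm (d i) * (h powr \<beta> i / \<beta> i)) < 1"
    using b0 by (auto simp: h_def)
  have ind: "AE s in lborel. s \<in> {a<..<a + real k * h} \<longrightarrow> g s = 0" for k :: nat
  proof (induction k)
    case 0
    then show ?case by simp
  next
    case (Suc k)
    define c where "c = a + real k * h"
    have ac: "a \<le> c" using h by (simp add: c_def)
    have step: "AE t in lborel. t \<in> {c<..<c+h} \<longrightarrow> g t = 0"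
      by (rule gronwall_step[OF gi supp S eq Suc[folded c_def] ac h])
    show ?case using Suc step AE_lborel_singleton[of c]
    proof eventually_elim
      case (elim t)
      show ?case
      proof
        assume t: "t \<in> {a<..<a + real (Suc k) * h}"
        have "t \<in> {a<..<c} \<or> t = c \<or> t \<in> {c<..<c+h}"
          using t by (auto simp: c_def algebra_simps)
        then show "g t = 0" using elim by (auto simp: c_def)
      qed
    qed
  qed
  obtain n :: nat where n: "(b - a) / h \<le> real n" using real_arch_simple by blast
  then have bn: "b \<le> a + real n * h" using h by (simp add: field_simps)
  show ?thesis using ind[of n]
  proof eventually_elim
    case (elim t)
    show ?case
    proof (cases "t \<in> {a<..<b}")
      case True
      then show ?thesis using elim bn by auto
    qed (use supp in auto)
  qed
qed

lemma LI1_eq: "LI a 1 g t = (\<integral> s. indicator {a<..<t} s *\<^sub>R g s \<partial>lborel)"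
  unfolding LI_def
  by (intro Bochner_Integration.integral_cong refl) (auto simp: kern_def indicator_def)

lemma indicator_Ioo_tendsto:
  fixes u :: "nat \<Rightarrow> real"
  assumes u: "u \<longlonglongrightarrow> t0" and s: "s \<noteq> t0"
  shows "(\<lambda>i. indicator {a<..<u i} s :: real) \<longlonglongrightarrow> indicator {a<..<t0} s"
proof (rule tendsto_eventually)
  show "\<forall>\<^sub>F i in sequentially. indicator {a<..<u i} s = (indicator {a<..<t0} s :: real)"
  proof (cases "s < t0")
    case True
    from order_tendstoD(1)[OF u True] show ?thesis
      by eventually_elim (use True in \<open>auto simp: indicator_def\<close>)
  next
    case False
    with s have "t0 < s" by simp
    from order_tendstoD(2)[OF u this] show ?thesis
      by eventually_elim (use \<open>t0 < s\<close> in \<open>auto simp: indicator_def\<close>)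
  qed
qed

lemma F_cont:
  fixes g :: "real \<Rightarrow> complex"
  assumes gi: "integrable lborel g"
  shows "isCont (\<lambda>t. \<integral> s. indicator {a<..<t} s *\<^sub>R g s \<partial>lborel) t0"
proof (rule continuous_at_sequentiallyI)
  have gm[measurable]: "g \<in> borel_measurable borel" using gi by auto
  fix u :: "nat \<Rightarrow> real" assume u: "u \<longlonglongrightarrow> t0"
  show "(\<lambda>n. \<integral> s. indicator {a<..<u n} s *\<^sub>R g s \<partial>lborel) \<longlonglongrightarrow> (\<integral> s. indicator {a<..<t0} s *\<^sub>R g s \<partial>lborel)"
  proof (rule integral_dominated_convergence[where w = "\<lambda>s. norm (g s)"])
    show "integrable lborel (\<lambda>s. norm (g s))" using gi by auto
    show "AE s in lborel. (\<lambda>i. indicator {a<..<u i} s *\<^sub>R g s) \<longlonglongrightarrow> indicator {a<..<t0} s *\<^sub>R g s"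
      using AE_lborel_singleton[of t0]
      by eventually_elim (intro tendsto_scaleR tendsto_const indicator_Ioo_tendsto[OF u])
    show "AE s in lborel. norm (indicator {a<..<u i} s *\<^sub>R g s) \<le> norm (g s)" for i
      by (intro AE_I2) (auto simp: indicator_def)
  qed measurable
qed

lemma F_zero:
  fixes g :: "real \<Rightarrow> complex"
  assumes gi: "integrable lborel g" and ab: "a < b"
    and ae: "AE t in lborel. t \<in> {a<..<b} \<longrightarrow> (\<integral> s. indicator {a<..<t} s *\<^sub>R g s \<partial>lborel) = 0"
    and t0: "t0 \<in> {a..b}"
  shows "(\<integral> s. indicator {a<..<t0} s *\<^sub>R g s \<partial>lborel) = 0"
proof (rule ccontr)
  define F where "F = (\<lambda>t. \<integral> s. indicator {a<..<t} s *\<^sub>R g s \<partial>lborel)"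
  assume "(\<integral> s. indicator {a<..<t0} s *\<^sub>R g s \<partial>lborel) \<noteq> 0"
  then have nz: "F t0 \<noteq> 0" by (simp add: F_def)
  have "(F \<longlongrightarrow> F t0) (at t0)" using F_cont[OF gi, of t0 a] unfolding F_def isCont_def by simp
  from tendsto_imp_eventually_ne[OF this nz]
  obtain e where e: "e > 0" "\<And>t. t \<noteq> t0 \<Longrightarrow> dist t t0 < e \<Longrightarrow> F t \<noteq> 0"
    unfolding eventually_at by auto
  define l where "l = max a (t0 - e)"
  define r where "r = min b (t0 + e)"
  have lr: "l < r" using e t0 ab by (auto simp: l_def r_def)
  have "AE t in lborel. t \<notin> {l<..<r}"
    using ae AE_lborel_singleton[of t0]
  proof eventually_elim
    case (elim t)
    show ?case
    proof
      assume t: "t \<in> {l<..<r}"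
      then have "t \<in> {a<..<b}" "dist t t0 < e" by (auto simp: l_def r_def dist_real_def)
      then show False using elim e(2)[of t] by (auto simp: F_def)
    qed
  qed
  then have "emeasure lborel {x \<in> space lborel. x \<in> {l<..<r}} = 0"
    by (intro emeasure_eq_0_AE) simp
  moreover have "{x \<in> space lborel. x \<in> {l<..<r}} = {l<..<r}" by auto
  ultimately have "emeasure lborel {l<..<r} = 0" by simp
  then show False using lr by simp
qed

lemma sets_lborel_Iio: "sets (lborel :: real measure) = sigma_sets UNIV (range lessThan)"
proof -
  have "sets (lborel :: real measure) = sets (borel :: real measure)" by simp
  also have "\<dots> = sets (sigma UNIV (range lessThan :: real set set))" by (subst borel_Iio) rule
  also have "\<dots> = sigma_sets UNIV (range lessThan)" by (rule sets_measure_of) simp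
  finally show ?thesis .
qed

lemma zero_from_F:
  fixes g :: "real \<Rightarrow> complex"
  assumes gi: "integrable lborel g" and supp: "\<And>s. s \<notin> {a<..<b} \<Longrightarrow> g s = 0" and ab: "a < b"
    and Fz: "\<And>t. t \<in> {a..b} \<Longrightarrow> (\<integral> s. indicator {a<..<t} s *\<^sub>R g s \<partial>lborel) = 0"
  shows "AE s in lborel. g s = 0"
proof -
  have lt: "(LINT s:{..<t}|lborel. g s) = 0" for t
  proof -
    have "(LINT s:{..<t}|lborel. g s) = (\<integral> s. indicator {a<..<max a (min t b)} s *\<^sub>R g s \<partial>lborel)"
      unfolding set_lebesgue_integral_def
    proof (intro Bochner_Integration.integral_cong refl)
      fix s
      show "indicat_real {..<t} s *\<^sub>R g s = indicat_real {a<..<max a (min t b)} s *\<^sub>R g s"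
        using supp[of s] by (cases "s \<in> {a<..<b}") (auto simp: indicator_def)
    qed
    also have "\<dots> = 0" using ab by (intro Fz) auto
    finally show ?thesis .
  qed
  have all: "(\<integral> s. g s \<partial>lborel) = 0"
  proof -
    have "(\<integral> s. g s \<partial>lborel) = (\<integral> s. indicator {a<..<b} s *\<^sub>R g s \<partial>lborel)"
    proof (intro Bochner_Integration.integral_cong refl)
      fix s
      show "g s = indicat_real {a<..<b} s *\<^sub>R g s"
        using supp[of s] by (cases "s \<in> {a<..<b}") (auto simp: indicator_def)
    qed
    also have "\<dots> = 0" using ab by (intro Fz) auto
    finally show ?thesis .
  qed
  have P: "(LINT s:A|lborel. g s) = 0" if A: "A \<in> sets lborel" for A
  proof -
    have A': "A \<in> sigma_sets UNIV (range lessThan)" using A sets_lborel_Iio by simp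
    have st: "Int_stable (range (lessThan :: real \<Rightarrow> real set))"
      unfolding Int_stable_def
    proof (intro ballI)
      fix X Y assume "X \<in> range (lessThan :: real \<Rightarrow> real set)" "Y \<in> range (lessThan :: real \<Rightarrow> real set)"
      then obtain x y where "X = {..<x}" "Y = {..<y}" by auto
      then have "X \<inter> Y = {..<min x y}" by auto
      then show "X \<inter> Y \<in> range lessThan" by simp
    qed
    have cl: "range lessThan \<subseteq> Pow (UNIV :: real set)" by auto
    show ?thesis using st cl A'
    proof (induction rule: sigma_sets_induct_disjoint)
      case (basic A)
      then show ?case using lt by auto
    next
      case empty
      then show ?case by (simp add: set_lebesgue_integral_def)
    next
      case (compl A)
      then have Am: "A \<in> sets lborel" using sets_lborel_Iio by simp
      have "(LINT s:(UNIV - A)|lborel. g s) = (\<integral> s. g s - indicator A s *\<^sub>R g s \<partial>lborel)"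
        unfolding set_lebesgue_integral_def
        by (intro Bochner_Integration.integral_cong refl) (auto simp: indicator_def)
      also have "\<dots> = (\<integral> s. g s \<partial>lborel) - (\<integral> s. indicator A s *\<^sub>R g s \<partial>lborel)"
        by (intro Bochner_Integration.integral_diff gi integrable_mult_indicator Am)
      also have "\<dots> = 0" using all compl(2) by (simp add: set_lebesgue_integral_def)
      finally show ?case .
    next
      case (union A)
      then have Am: "A i \<in> sets lborel" for i using sets_lborel_Iio by auto
      have "(LINT s:(\<Union>i. A i)|lborel. g s) = (\<Sum>i. (LINT s:(A i)|lborel. g s))"
      proof (rule lebesgue_integral_countable_add)
        show "A i \<inter> A j = {}" if "i \<noteq> j" for i j using union(1) that by (auto simp: disjoint_family_on_def)
        show "set_integrable lborel (\<Union>i. A i) g"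
          unfolding set_integrable_def using Am by (intro integrable_mult_indicator gi) auto
      qed (rule Am)
      also have "\<dots> = 0" using union(3) by simp
      finally show ?case .
    qed
  qed
  show ?thesis
    by (rule sigma_finite_measure.density_zero[OF sigma_finite_lborel gi]) (auto simp: P)
qed

lemma inj1:
  fixes g :: "real \<Rightarrow> complex"
  assumes gi: "integrable lborel g" and supp: "\<And>s. s \<notin> {a<..<b} \<Longrightarrow> g s = 0" and ab: "a < b"
    and z: "AE t in lborel. t \<in> {a<..<b} \<longrightarrow> LI a 1 g t = 0"
  shows "AE s in lborel. g s = 0"
proof (rule zero_from_F[OF gi supp ab])
  fix t assume "t \<in> {a..b}"
  then show "(\<integral> s. indicator {a<..<t} s *\<^sub>R g s \<partial>lborel) = 0"
    by (intro F_zero[OF gi ab]) (use z in \<open>auto simp: LI1_eq\<close>)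
qed

lemma LI_AE_zero:
  assumes "AE s in lborel. u s = 0"
  shows "LI a \<beta> u t = 0"
proof -
  show ?thesis
    unfolding LI_def by (rule integral_eq_zero_AE) (use assms in \<open>auto elim!: eventually_mono\<close>)
qed

lemma inj_le1:
  fixes g :: "real \<Rightarrow> complex"
  assumes gi: "integrable lborel g" and supp: "\<And>s. s \<notin> {a<..<b} \<Longrightarrow> g s = 0" and ab: "a < b"
    and al: "0 < \<alpha>" "\<alpha> \<le> 1"
    and z: "AE t in lborel. t \<in> {a<..<b} \<longrightarrow> LI a \<alpha> g t = 0"
  shows "AE s in lborel. g s = 0"
proof (cases "\<alpha> = 1")
  case True
  then show ?thesis using inj1[OF gi supp ab] z by simp
next
  case False
  define \<beta> where "\<beta> = 1 - \<alpha>"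
  have b: "\<beta> > 0" using al False by (simp add: \<beta>_def)
  define u where "u = (\<lambda>t. indicator {a<..<b} t *\<^sub>R LI a \<alpha> g t)"
  have u0: "AE s in lborel. u s = 0" using z by eventually_elim (auto simp: u_def indicator_def)
  have "AE t in lborel. t \<in> {a<..<b} \<longrightarrow> LI a \<beta> u t = complex_of_real (Beta \<alpha> \<beta>) * LI a (\<alpha> + \<beta>) g t"
    unfolding u_def by (rule semigroup[OF gi al(1) b]) (use ab in simp)
  then have "AE t in lborel. t \<in> {a<..<b} \<longrightarrow> LI a 1 g t = 0"
  proof eventually_elim
    case (elim t)
    have B: "Beta \<alpha> \<beta> \<noteq> 0" using Beta_pos[OF al(1) b] by simp
    show ?case using elim LI_AE_zero[OF u0, of a \<beta> t] B by (auto simp: \<beta>_def)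
  qed
  then show ?thesis using inj1[OF gi supp ab] by simp
qed

lemma injective:
  fixes g :: "real \<Rightarrow> complex"
  assumes "integrable lborel g" "\<And>s. s \<notin> {a<..<b} \<Longrightarrow> g s = 0" "a < b"
    and "0 < \<alpha>" "\<alpha> \<le> real m + 1"
    and "AE t in lborel. t \<in> {a<..<b} \<longrightarrow> LI a \<alpha> g t = 0"
  shows "AE s in lborel. g s = 0"
  using assms
proof (induction m arbitrary: \<alpha> g)
  case 0
  then show ?case using inj_le1[of g a b \<alpha>] by simp
next
  case (Suc m)
  show ?case
  proof (cases "\<alpha> \<le> 1")
    case True
    then show ?thesis using inj_le1[of g a b \<alpha>] Suc.prems by simp
  next
    case False
    have gi: "integrable lborel g" by fact
    have ab: "a < b" by fact
    define u where "u = (\<lambda>t. indicator {a<..<b} t *\<^sub>R LI a (\<alpha> - 1) g t)"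
    have ui: "integrable lborel u" unfolding u_def using False ab by (intro LI_integrable gi) auto
    have us: "u s = 0" if "s \<notin> {a<..<b}" for s using that by (simp add: u_def)
    have "AE t in lborel. t \<in> {a<..<b} \<longrightarrow> LI a 1 u t = complex_of_real (Beta (\<alpha> - 1) 1) * LI a (\<alpha> - 1 + 1) g t"
      unfolding u_def by (rule semigroup[OF gi]) (use False ab in auto)
    then have "AE t in lborel. t \<in> {a<..<b} \<longrightarrow> LI a 1 u t = 0"
      using Suc.prems(6) by eventually_elim auto
    then have u0: "AE s in lborel. u s = 0" by (intro inj1[OF ui _ ab]) (auto simp: us)
    have "AE t in lborel. t \<in> {a<..<b} \<longrightarrow> LI a (\<alpha> - 1) g t = 0"
      using u0 by eventually_elim (auto simp: u_def)
    then show ?thesis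
      using Suc.IH[of g "\<alpha> - 1"] Suc.prems False by auto
  qed
qed




lemma solve_lin:
  fixes C0 v :: complex and K w c :: "nat \<Rightarrow> complex"
  assumes "C0 \<noteq> 0" "C0 * v + (\<Sum>i\<in>S. c i * K i * w i) = 0"
  shows "v = (\<Sum>i\<in>S. (- (c i * K i) / C0) * w i)"
proof -
  have s: "(\<Sum>i\<in>S. c i * K i * w i) = - (C0 * v)" using assms(2) by (simp only: add_eq_0_iff)
  have "(\<Sum>i\<in>S. (- (c i * K i) / C0) * w i) = (\<Sum>i\<in>S. (c i * K i * w i) * (- inverse C0))"
    by (intro sum.cong refl) (simp add: divide_inverse algebra_simps)
  also have "\<dots> = (\<Sum>i\<in>S. c i * K i * w i) * (- inverse C0)" by (simp only: sum_distrib_right)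
  also have "\<dots> = v" unfolding s using assms(1) by simp
  finally show ?thesis by simp
qed

lemma RL_diff:
  fixes x y :: "real \<Rightarrow> complex"
  assumes xi: "set_integrable lborel {a<..<b} x" and yi: "set_integrable lborel {a<..<b} y"
    and al: "\<alpha> \<ge> 0" and ab: "a < b"
  shows "AE t in lborel. t \<in> {a<..<b} \<longrightarrow>
    RL_int a \<alpha> x t - RL_int a \<alpha> y t = RL_int a \<alpha> (\<lambda>s. indicator {a<..<b} s *\<^sub>R (x s - y s)) t"
proof (cases "\<alpha> = 0")
  case True
  then show ?thesis by (intro AE_I2) (auto simp: RL_int_def indicator_def)
next
  case False
  then have al: "\<alpha> > 0" using al by simp
  define x' where "x' = (\<lambda>s. indicator {a<..<b} s *\<^sub>R x s)"
  define y' where "y' = (\<lambda>s. indicator {a<..<b} s *\<^sub>R y s)"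
  have xi': "integrable lborel x'" using xi by (simp add: x'_def set_integrable_def)
  have yi': "integrable lborel y'" using yi by (simp add: y'_def set_integrable_def)
  have fx: "AE t in lborel. t \<in> {a<..<b} \<longrightarrow> (\<integral>\<^sup>+ s. ennreal (kern a \<alpha> t s) * ennreal (norm (x' s)) \<partial>lborel) < \<infinity>"
    using ab by (intro kern_fin[OF xi' al]) simp
  have fy: "AE t in lborel. t \<in> {a<..<b} \<longrightarrow> (\<integral>\<^sup>+ s. ennreal (kern a \<alpha> t s) * ennreal (norm (y' s)) \<partial>lborel) < \<infinity>"
    using ab by (intro kern_fin[OF yi' al]) simp
  show ?thesis using fx fy
  proof eventually_elim
    case (elim t)
    show ?case
    proof
      assume t: "t \<in> {a<..<b}"
      have ix: "integrable lborel (\<lambda>s. complex_of_real (kern a \<alpha> t s) * x' s)"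
        using kern_integrable[OF xi'] elim t by auto
      have iy: "integrable lborel (\<lambda>s. complex_of_real (kern a \<alpha> t s) * y' s)"
        using kern_integrable[OF yi'] elim t by auto
      have "LI a \<alpha> x t - LI a \<alpha> y t = LI a \<alpha> x' t - LI a \<alpha> y' t"
        using t LI_restrict[of t b a \<alpha>] by (simp add: x'_def y'_def)
      also have "\<dots> = (\<integral> s. complex_of_real (kern a \<alpha> t s) * x' s - complex_of_real (kern a \<alpha> t s) * y' s \<partial>lborel)"
        unfolding LI_def by (rule Bochner_Integration.integral_diff[OF ix iy, symmetric])
      also have "\<dots> = LI a \<alpha> (\<lambda>s. indicator {a<..<b} s *\<^sub>R (x s - y s)) t"
        unfolding LI_def by (intro Bochner_Integration.integral_cong refl) (simp add: x'_def y'_def algebra_simps)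
      finally have calc: "LI a \<alpha> x t - LI a \<alpha> y t = LI a \<alpha> (\<lambda>s. indicator {a<..<b} s *\<^sub>R (x s - y s)) t" .
      have "RL_int a \<alpha> x t - RL_int a \<alpha> y t = complex_of_real (1 / Gamma \<alpha>) * (LI a \<alpha> x t - LI a \<alpha> y t)"
        by (simp only: RL_LI[OF False] right_diff_distrib)
      also have "\<dots> = RL_int a \<alpha> (\<lambda>s. indicator {a<..<b} s *\<^sub>R (x s - y s)) t"
        by (simp only: calc RL_LI[OF False])
      finally show "RL_int a \<alpha> x t - RL_int a \<alpha> y t = RL_int a \<alpha> (\<lambda>s. indicator {a<..<b} s *\<^sub>R (x s - y s)) t" .
    qed
  qed
qed


theorem mainTheorem7:
  fixes a b :: real and n :: nat and r :: "nat \<Rightarrow> real" and c :: "nat \<Rightarrow> complex"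
    and f x y :: "real \<Rightarrow> complex"
  assumes "a < b"
    and "set_integrable lborel {a<..<b} f"
    and "\<forall>i<n. r i \<in> \<rat> \<and> r i \<ge> 0"
    and "inj_on r {..<n}"
    and "\<exists>i<n. c i \<noteq> 0"
    and "set_integrable lborel {a<..<b} x"
    and "AE t in lborel. t \<in> {a<..<b} \<longrightarrow> (\<Sum>i<n. c i * RL_int a (r i) x t) = f t"
    and "set_integrable lborel {a<..<b} y"
    and "AE t in lborel. t \<in> {a<..<b} \<longrightarrow> (\<Sum>i<n. c i * RL_int a (r i) y t) = f t"
  shows "AE t in lborel. t \<in> {a<..<b} \<longrightarrow> x t = y t"
proof -
  note ab = assms(1) and rpos = assms(3) and rinj = assms(4) and cnz = assms(5)
    and xi = assms(6) and ex = assms(7) and yi = assms(8) and ey = assms(9)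
  define z where "z = (\<lambda>s. indicator {a<..<b} s *\<^sub>R (x s - y s))"
  have zi: "integrable lborel z"
    using set_integral_diff(1)[OF xi yi] by (simp add: z_def set_integrable_def)
  have zs: "z s = 0" if "s \<notin> {a<..<b}" for s using that by (simp add: z_def)
  have lin: "AE t in lborel. \<forall>i\<in>{..<n}. t \<in> {a<..<b} \<longrightarrow>
      RL_int a (r i) x t - RL_int a (r i) y t = RL_int a (r i) z t"
    unfolding z_def using rpos ab
    by (intro eventually_ball_finite ballI RL_diff[OF xi yi]) auto
  have ez: "AE t in lborel. t \<in> {a<..<b} \<longrightarrow> (\<Sum>i<n. c i * RL_int a (r i) z t) = 0"
    using lin ex ey
  proof eventually_elim
    case (elim t)
    show ?case
    proof
      assume t: "t \<in> {a<..<b}"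
      have "(\<Sum>i<n. c i * RL_int a (r i) z t) = (\<Sum>i<n. c i * RL_int a (r i) x t - c i * RL_int a (r i) y t)"
        using elim(1) t by (intro sum.cong refl) (simp add: right_diff_distrib[symmetric])
      also have "\<dots> = 0" using elim(2,3) t by (simp add: sum_subtractf)
      finally show "(\<Sum>i<n. c i * RL_int a (r i) z t) = 0" .
    qed
  qed
  define S0 where "S0 = {i. i < n \<and> c i \<noteq> 0}"
  have S0f: "finite S0" by (simp add: S0_def)
  have S0ne: "S0 \<noteq> {}" using cnz by (auto simp: S0_def)
  define \<alpha>0 where "\<alpha>0 = Min (r ` S0)"
  have "\<alpha>0 \<in> r ` S0" unfolding \<alpha>0_def using S0f S0ne by (intro Min_in) auto
  then obtain i0 where i0: "i0 \<in> S0" "r i0 = \<alpha>0" by auto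
  define S' where "S' = S0 - {i0}"
  have S'f: "finite S'" using S0f by (simp add: S'_def)
  have gt: "r i > \<alpha>0" if "i \<in> S'" for i
  proof -
    have "r i \<ge> \<alpha>0" using that S0f by (auto simp: S'_def \<alpha>0_def)
    moreover have "r i \<noteq> r i0"
      using that i0(1) rinj by (auto simp: S'_def S0_def inj_on_def)
    ultimately show ?thesis using i0 by simp
  qed
  have a0: "\<alpha>0 \<ge> 0" using i0 rpos by (auto simp: S0_def)
  have ci0: "c i0 \<noteq> 0" using i0 by (simp add: S0_def)
  have split: "(\<Sum>i<n. c i * RL_int a (r i) z t) = c i0 * RL_int a \<alpha>0 z t + (\<Sum>i\<in>S'. c i * RL_int a (r i) z t)" for t
  proof -
    have "(\<Sum>i<n. c i * RL_int a (r i) z t) = (\<Sum>i\<in>S0. c i * RL_int a (r i) z t)"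
      by (rule sum.mono_neutral_right) (auto simp: S0_def)
    also have "\<dots> = c i0 * RL_int a (r i0) z t + (\<Sum>i\<in>S'. c i * RL_int a (r i) z t)"
      unfolding S'_def using i0(1) S0f by (simp add: sum.remove)
    finally show ?thesis using i0 by simp
  qed
  have rS'pos: "r i > 0" if "i \<in> S'" for i using gt[OF that] a0 by simp
  have zAE: "AE s in lborel. z s = 0"
  proof (cases "\<alpha>0 = 0")
    case True
    show ?thesis
    proof (rule gronwall[OF zi zs S'f rS'pos])
      show "AE t in lborel. t \<in> {a<..<b} \<longrightarrow> z t = (\<Sum>i\<in>S'. (- (c i * complex_of_real (1 / Gamma (r i))) / c i0) * LI a (r i) z t)"
        using ez
      proof eventually_elim
        case (elim t)
        show ?case
        proof
          assume t: "t \<in> {a<..<b}"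
          have e1: "RL_int a \<alpha>0 z t = z t" using True by (simp add: RL_int_def)
          have e2: "(\<Sum>i\<in>S'. c i * RL_int a (r i) z t) = (\<Sum>i\<in>S'. c i * complex_of_real (1 / Gamma (r i)) * LI a (r i) z t)"
          proof (intro sum.cong refl)
            fix i assume "i \<in> S'"
            then have ri: "r i \<noteq> 0" using rS'pos by force
            show "c i * RL_int a (r i) z t = c i * complex_of_real (1 / Gamma (r i)) * LI a (r i) z t"
              by (simp only: RL_LI[OF ri] mult.assoc)
          qed
          have "c i0 * RL_int a \<alpha>0 z t + (\<Sum>i\<in>S'. c i * RL_int a (r i) z t) = 0"
            using elim t split[of t] by simp
          then have "c i0 * z t + (\<Sum>i\<in>S'. c i * complex_of_real (1 / Gamma (r i)) * LI a (r i) z t) = 0"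
            unfolding e1 e2 .
          then show "z t = (\<Sum>i\<in>S'. (- (c i * complex_of_real (1 / Gamma (r i))) / c i0) * LI a (r i) z t)"
            by (rule solve_lin[OF ci0])
        qed
      qed
    qed
  next
    case False
    then have a0p: "\<alpha>0 > 0" using a0 by simp
    define u where "u = (\<lambda>t. indicator {a<..<b} t *\<^sub>R LI a \<alpha>0 z t)"
    have ui: "integrable lborel u" unfolding u_def using ab by (intro LI_integrable zi a0p) auto
    have us: "u s = 0" if "s \<notin> {a<..<b}" for s using that by (simp add: u_def)
    define \<beta> where "\<beta> = (\<lambda>i. r i - \<alpha>0)"
    have bpos: "\<beta> i > 0" if "i \<in> S'" for i using gt[OF that] by (simp add: \<beta>_def)
    define B where "B = (\<lambda>i. complex_of_real (Beta \<alpha>0 (\<beta> i)))"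
    have Bnz: "B i \<noteq> 0" if "i \<in> S'" for i using Beta_pos[OF a0p bpos[OF that]] by (simp add: B_def)
    have sg: "AE t in lborel. \<forall>i\<in>S'. t \<in> {a<..<b} \<longrightarrow> LI a (\<beta> i) u t = B i * LI a (r i) z t"
    proof (intro eventually_ball_finite[OF S'f] ballI)
      fix i assume i: "i \<in> S'"
      show "AE t in lborel. t \<in> {a<..<b} \<longrightarrow> LI a (\<beta> i) u t = B i * LI a (r i) z t"
        using semigroup[OF zi a0p bpos[OF i] less_imp_le[OF ab]] by (simp add: u_def B_def \<beta>_def)
    qed
    define C0 where "C0 = c i0 * complex_of_real (1 / Gamma \<alpha>0)"
    have C0: "C0 \<noteq> 0" using ci0 Gamma_real_pos[OF a0p] by (simp add: C0_def)
    have "AE t in lborel. t \<in> {a<..<b} \<longrightarrow> u t = (\<Sum>i\<in>S'. (- (c i * (complex_of_real (1 / Gamma (r i)) / B i)) / C0) * LI a (\<beta> i) u t)"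
      using ez sg
    proof eventually_elim
      case (elim t)
      show ?case
      proof
        assume t: "t \<in> {a<..<b}"
        have "(\<Sum>i\<in>S'. c i * RL_int a (r i) z t) = (\<Sum>i\<in>S'. c i * (complex_of_real (1 / Gamma (r i)) / B i) * LI a (\<beta> i) u t)"
        proof (intro sum.cong refl)
          fix i assume i: "i \<in> S'"
          then show "c i * RL_int a (r i) z t = c i * (complex_of_real (1 / Gamma (r i)) / B i) * LI a (\<beta> i) u t"
            using elim(2) t Bnz[OF i] rS'pos[OF i] by (simp add: RL_LI)
        qed
        moreover have "c i0 * RL_int a \<alpha>0 z t = C0 * u t"
          using t False by (simp add: RL_LI C0_def u_def)
        ultimately have "C0 * u t + (\<Sum>i\<in>S'. c i * (complex_of_real (1 / Gamma (r i)) / B i) * LI a (\<beta> i) u t) = 0"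
          using elim(1) t split[of t] by simp
        then show "u t = (\<Sum>i\<in>S'. (- (c i * (complex_of_real (1 / Gamma (r i)) / B i)) / C0) * LI a (\<beta> i) u t)"
          by (rule solve_lin[OF C0])
      qed
    qed
    from gronwall[OF ui us S'f bpos this]
    have u0: "AE s in lborel. u s = 0" .
    have "AE t in lborel. t \<in> {a<..<b} \<longrightarrow> LI a \<alpha>0 z t = 0"
      using u0 by eventually_elim (auto simp: u_def)
    moreover obtain m :: nat where "\<alpha>0 \<le> real m" using real_arch_simple by blast
    ultimately show ?thesis
      by (intro injective[OF zi zs ab a0p, of m]) auto
  qed
  show ?thesis using zAE
    by eventually_elim (auto simp: z_def)
qed



end
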